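(* Let $d\ge2$ and let $E\subset C(\mathbb{R}^d)$ be a complex linear subspace of finite dimension $\ell$ such that for every $a\in\mathbb{R}^d$ the space $E_a:=\{x\mapsto f(x+a): f\in E\}$ is $\mathrm{SO}(d)$-invariant (i.e. $g\in E_a$, $U\in\mathrm{SO}(d)$ imply $x\mapsto g(U^{-1}x)$ belongs to $E_a$). Then every element of $E$ is a polynomial of degree at most $d\ell$.
   Context: $C(\mathbb{R}^d)$ denotes the space of continuous complex-valued functions on $\mathbb{R}^d$. *)

theory Defs
  imports "HOL-Analysis.Analysis"
begin

definition csubspace_fun :: "('a \<Rightarrow> complex) set \<Rightarrow> bool" where
  "csubspace_fun E \<longleftrightarrow> (\<lambda>x. 0) \<in> E \<and> (\<forall>f\<in>E. \<forall>g\<in>E. (\<lambda>x. f x + g x) \<in> E)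
      \<and> (\<forall>c::complex. \<forall>f\<in>E. (\<lambda>x. c * f x) \<in> E)"

definition cspan_fun :: "('a \<Rightarrow> complex) set \<Rightarrow> ('a \<Rightarrow> complex) set" where
  "cspan_fun B = {f. \<exists>c::('a \<Rightarrow> complex) \<Rightarrow> complex. f = (\<lambda>x. \<Sum>b\<in>B. c b * b x)}"

definition cindep_fun :: "('a \<Rightarrow> complex) set \<Rightarrow> bool" where
  "cindep_fun B \<longleftrightarrow> (\<forall>c::('a \<Rightarrow> complex) \<Rightarrow> complex.
      (\<forall>x. (\<Sum>b\<in>B. c b * b x) = 0) \<longrightarrow> (\<forall>b\<in>B. c b = 0))"

definition cdim_fun :: "('a \<Rightarrow> complex) set \<Rightarrow> nat \<Rightarrow> bool" where
  "cdim_fun E l \<longleftrightarrow> (\<exists>B. finite B \<and> card B = l \<and> B \<subseteq> E \<and> cindep_fun B \<and> cspan_fun B = E)"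

definition poly_fun_deg :: "nat \<Rightarrow> (real^'n \<Rightarrow> complex) \<Rightarrow> bool" where
  "poly_fun_deg N f \<longleftrightarrow> (\<exists>c::('n \<Rightarrow> nat) \<Rightarrow> complex. \<forall>x.
      f x = (\<Sum>\<alpha>\<in>{\<alpha>. (\<Sum>i\<in>UNIV. \<alpha> i) \<le> N}. c \<alpha> * (\<Prod>i\<in>UNIV. complex_of_real (x$i ^ \<alpha> i))))"

definition translate_set :: "real^'n \<Rightarrow> (real^'n \<Rightarrow> complex) set \<Rightarrow> (real^'n \<Rightarrow> complex) set" where
  "translate_set a E = (\<lambda>f x. f (x + a)) ` E"

end

theory Submission
  imports Defs "HOL-Computational_Algebra.Fundamental_Theorem_Algebra" "HOL-Library.Function_Algebras"
begin

definition Dlt :: "('a \<Rightarrow> 'a) \<Rightarrow> ('a \<Rightarrow> complex) \<Rightarrow> ('a \<Rightarrow> complex)" where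
  "Dlt \<sigma> f = (\<lambda>x. f (\<sigma> x) - f x)"

lemma Dlt_pow_comp:
  assumes "\<And>x. \<sigma> (\<rho> x) = \<rho> (\<tau> x)"
  shows "(Dlt \<tau> ^^ n) (\<lambda>x. f (\<rho> x)) = (\<lambda>x. ((Dlt \<sigma> ^^ n) f) (\<rho> x))"
  by (induction n) (simp_all add: Dlt_def assms)

lemma Dlt_pow_diff:
  "(Dlt \<sigma> ^^ n) (\<lambda>x. f x - g x) = (\<lambda>x. (Dlt \<sigma> ^^ n) f x - (Dlt \<sigma> ^^ n) g x)"
  by (induction n) (simp_all add: Dlt_def algebra_simps)

lemma poly_kill:
  fixes q :: "complex poly"
  assumes "degree q < n \<or> q = 0"
  shows "(Dlt (\<lambda>z. z + h) ^^ n) (poly q) = (\<lambda>z. 0)"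
  using assms
proof (induction n arbitrary: q)
  case 0
  then show ?case by auto
next
  case (Suc n)
  define r where "r = pcompose q [:h, 1:] - q"
  have Dq: "Dlt (\<lambda>z. z + h) (poly q) = poly r"
    by (simp add: r_def Dlt_def fun_eq_iff poly_pcompose algebra_simps)
  have "degree r < n \<or> r = 0"
  proof (cases "degree q = 0")
    case True
    then obtain c where "q = [:c:]" by (metis degree_eq_zeroE)
    then have "r = 0" by (simp add: r_def)
    then show ?thesis by simp
  next
    case False
    have d1: "degree (pcompose q [:h, 1:]) = degree q"
      by (simp add: degree_pcompose)
    have l1: "lead_coeff (pcompose q [:h, 1:]) = lead_coeff q"
      by (simp add: lead_coeff_comp)
    have dr: "degree r \<le> degree q"
      unfolding r_def using d1 degree_diff_le by (metis order_refl)
    have cr: "coeff r (degree q) = 0"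
      unfolding r_def using d1 l1 by simp
    have "degree r < degree q \<or> r = 0"
    proof (cases "r = 0")
      case False
      then show ?thesis using dr cr
        by (metis leading_coeff_0_iff nat_less_le)
    qed simp
    then show ?thesis using Suc.prems False by auto
  qed
  then have "(Dlt (\<lambda>z. z + h) ^^ n) (poly r) = (\<lambda>z. 0)" by (rule Suc.IH)
  then show ?case by (simp add: funpow_Suc_right Dq del: funpow.simps)
qed

definition lag :: "nat \<Rightarrow> nat \<Rightarrow> complex poly" where
  "lag n i = smult (1 / (\<Prod>j\<in>{..<n}-{i}. (of_nat i - of_nat j)))
                   (\<Prod>j\<in>{..<n}-{i}. [:- of_nat j, 1:])"

lemma lag_eval:
  assumes "i < n" "j < n"
  shows "poly (lag n i) (of_nat j) = (if i = j then 1 else 0)"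
proof (cases "i = j")
  case True
  have "(\<Prod>k\<in>{..<n}-{i}. (of_nat i - of_nat k :: complex)) \<noteq> 0"
    by (subst prod_zero_iff) auto
  then show ?thesis using True by (simp add: lag_def poly_prod)
next
  case False
  have "(\<Prod>k\<in>{..<n}-{i}. poly [:- of_nat k, 1:] (of_nat j :: complex)) = 0"
    using False assms by (subst prod_zero_iff) auto
  then show ?thesis using False by (simp add: lag_def poly_prod)
qed

lemma lag_degree:
  assumes "i < n"
  shows "degree (lag n i) < n"
proof -
  have "degree (\<Prod>j\<in>{..<n}-{i}. [:- (of_nat j::complex), 1:]) \<le> sum (degree \<circ> (\<lambda>j. [:- (of_nat j::complex), 1:])) ({..<n}-{i})"
    by (rule degree_prod_sum_le) simp
  also have "\<dots> = card ({..<n}-{i})" by simp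
  also have "\<dots> < n" using assms by simp
  finally show ?thesis unfolding lag_def by (meson degree_smult_le le_less_trans)
qed

lemma interp_degree:
  "degree (\<Sum>i<n. smult (v i) (lag n i)) < n \<or> (\<Sum>i<n. smult (v i) (lag n i)) = 0"
proof (cases "n = 0")
  case False
  then show ?thesis
    by (intro disjI1 degree_sum_less) (auto simp: lag_degree)
qed simp

lemma interp_eval:
  assumes "j < n"
  shows "poly (\<Sum>i<n. smult (v i) (lag n i)) (of_nat j) = v j"
proof -
  have "poly (\<Sum>i<n. smult (v i) (lag n i)) (of_nat j) = (\<Sum>i<n. v i * (if i = j then 1 else 0))"
    by (simp add: poly_sum lag_eval assms)
  also have "\<dots> = v j" using assms by (simp add: if_distrib cong: if_cong)
  finally show ?thesis .
qed

lemma int_const: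
  fixes s :: "int \<Rightarrow> complex"
  assumes "\<And>k. s (k + 1) = s k"
  shows "s k = s 0"
proof (induction k rule: int_induct[where k = 0])
  case base then show ?case by simp
next
  case (step1 i) then show ?case using assms by simp
next
  case (step2 i) then show ?case using assms[of "i - 1"] by simp
qed

lemma seq_unique:
  fixes s :: "int \<Rightarrow> complex"
  assumes "(Dlt (\<lambda>k. k + 1) ^^ n) s = (\<lambda>k. 0)" "\<And>k. k < n \<Longrightarrow> s (int k) = 0"
  shows "s = (\<lambda>k. 0)"
  using assms
proof (induction n arbitrary: s)
  case 0
  then show ?case by simp
next
  case (Suc n)
  have "(Dlt (\<lambda>k. k + 1) ^^ n) (Dlt (\<lambda>k. k + 1) s) = (\<lambda>k. 0)"
    using Suc.prems(1) by (simp add: funpow_Suc_right del: funpow.simps)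
  moreover have "Dlt (\<lambda>k. k + 1) s (int k) = 0" if "k < n" for k
    using Suc.prems(2)[of k] Suc.prems(2)[of "Suc k"] that by (simp add: Dlt_def add.commute)
  ultimately have "Dlt (\<lambda>k. k + 1) s = (\<lambda>k. 0)" by (rule Suc.IH)
  then have "\<And>k. s (k + 1) = s k" by (simp add: Dlt_def fun_eq_iff)
  then have "s k = s 0" for k by (rule int_const)
  moreover have "s 0 = 0" using Suc.prems(2)[of 0] by simp
  ultimately show ?case by auto
qed

lemma frechet0:
  fixes \<phi> :: "real \<Rightarrow> complex"
  assumes cont: "continuous_on UNIV \<phi>"
    and D: "\<And>h. (Dlt (\<lambda>t. t + h) ^^ n) \<phi> = (\<lambda>t. 0)"
    and z: "\<And>i. i < n \<Longrightarrow> \<phi> (real i) = 0"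
  shows "\<phi> t = 0"
proof -
  have int0: "\<phi> (of_int j) = 0" for j
  proof -
    have "(Dlt (\<lambda>k. k + 1) ^^ n) (\<lambda>k::int. \<phi> (of_int k)) = (\<lambda>k. ((Dlt (\<lambda>t. t + 1) ^^ n) \<phi>) (of_int k))"
      by (rule Dlt_pow_comp) simp
    also have "\<dots> = (\<lambda>k. 0)" by (simp only: D)
    finally have "(\<lambda>k::int. \<phi> (of_int k)) = (\<lambda>k. 0)"
    proof (rule seq_unique)
      fix i :: nat assume "i < n"
      then show "\<phi> (of_int (int i)) = 0" using z[of i] by simp
    qed
    then show ?thesis by (simp add: fun_eq_iff)
  qed
  have dy: "\<phi> (of_int k / 2^m) = 0" for k m
  proof -
    define s where "s = (\<lambda>k::int. \<phi> (of_int k / 2^m))"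
    have "(Dlt (\<lambda>k. k + 1) ^^ n) s = (\<lambda>k. ((Dlt (\<lambda>t. t + 1/2^m) ^^ n) \<phi>) (of_int k / 2^m))"
      unfolding s_def by (rule Dlt_pow_comp) (simp add: add_divide_distrib)
    then have Ds: "(Dlt (\<lambda>k. k + 1) ^^ n) s = (\<lambda>k. 0)" by (simp only: D)
    define q where "q = (\<Sum>i<n. smult (s (int i)) (lag n i))"
    define s' where "s' = (\<lambda>k. s k - poly q (of_int k))"
    have "(Dlt (\<lambda>k. k+1) ^^ n) (\<lambda>k::int. poly q (of_int k)) = (\<lambda>k. ((Dlt (\<lambda>z. z + 1) ^^ n) (poly q)) (of_int k))"
      by (rule Dlt_pow_comp) simp
    also have "\<dots> = (\<lambda>k. 0)" unfolding q_def using poly_kill[OF interp_degree] by simp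
    finally have "(Dlt (\<lambda>k. k+1) ^^ n) s' = (\<lambda>k. 0)"
      unfolding s'_def Dlt_pow_diff using Ds by simp
    moreover have "s' (int i) = 0" if "i < n" for i
      using interp_eval[OF that, of "\<lambda>i. s (int i)"] by (simp add: s'_def q_def)
    ultimately have "s' = (\<lambda>k. 0)" by (rule seq_unique)
    then have sq: "s k = poly q (of_int k)" for k by (simp add: s'_def fun_eq_iff)
    have "q = 0"
    proof (rule ccontr)
      assume "q \<noteq> 0"
      then have fin: "finite {x. poly q x = 0}" by (rule poly_roots_finite)
      have "range (\<lambda>j::nat. of_nat (2^m * j) :: complex) \<subseteq> {x. poly q x = 0}"
      proof clarify
        fix j :: nat
        have "poly q (of_nat (2^m * j)) = poly q (of_int (int (2^m * j)))" by simp
        also have "\<dots> = s (int (2^m * j))" by (rule sq[symmetric])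
        also have "\<dots> = \<phi> (of_int (int j))"
        proof -
          have "real (2^m * j) / 2^m = real j" by simp
          then show ?thesis by (simp add: s_def)
        qed
        also have "\<dots> = 0" by (rule int0)
        finally show "poly q (of_nat (2^m * j)) = 0" .
      qed
      moreover have "infinite (range (\<lambda>j::nat. of_nat (2^m * j) :: complex))"
        by (rule range_inj_infinite) (simp add: inj_def)
      ultimately show False using fin finite_subset by blast
    qed
    then have "s k = 0" using sq[of k] by simp
    then show ?thesis by (simp add: s_def)
  qed
  define x where "x = (\<lambda>m::nat. of_int \<lfloor>2^m * t\<rfloor> / (2::real)^m)"
  have "(\<lambda>m. t - x m) \<longlonglongrightarrow> 0"
  proof (rule Lim_null_comparison)
    show "\<forall>\<^sub>F m in sequentially. norm (t - x m) \<le> (1/2) ^ m"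
    proof (intro always_eventually allI)
      fix m :: nat
      have p: "(2::real)^m > 0" by simp
      have "t - x m = (2^m * t - of_int \<lfloor>2^m * t\<rfloor>) / 2^m"
        using p by (simp add: x_def field_simps)
      moreover have "0 \<le> 2^m * t - of_int \<lfloor>2^m * t\<rfloor>" "2^m * t - of_int \<lfloor>2^m * t\<rfloor> \<le> 1"
        by linarith+
      ultimately show "norm (t - x m) \<le> (1/2) ^ m"
        using p by (simp add: power_one_over divide_le_cancel)
    qed
    show "(\<lambda>m. (1/2::real) ^ m) \<longlonglongrightarrow> 0" by (rule LIMSEQ_realpow_zero) auto
  qed
  then have "(\<lambda>m. t - (t - x m)) \<longlonglongrightarrow> t - 0" by (intro tendsto_intros)
  then have xl: "x \<longlonglongrightarrow> t" by simp
  have "isCont \<phi> t" using cont by (simp add: continuous_on_eq_continuous_at)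
  then have "(\<lambda>m. \<phi> (x m)) \<longlonglongrightarrow> \<phi> t" using xl by (rule isCont_tendsto_compose)
  moreover have "(\<lambda>m. \<phi> (x m)) = (\<lambda>m. 0)" using dy by (simp add: x_def fun_eq_iff)
  ultimately have "(\<lambda>m. 0::complex) \<longlonglongrightarrow> \<phi> t" by simp
  then show ?thesis using LIMSEQ_unique[OF _ tendsto_const] by metis
qed

lemma frechet_lag:
  fixes \<psi> :: "real \<Rightarrow> complex"
  assumes cont: "continuous_on UNIV \<psi>"
    and D: "\<And>h. (Dlt (\<lambda>t. t + h) ^^ n) \<psi> = (\<lambda>t. 0)"
  shows "\<psi> t = (\<Sum>i<n. poly (lag n i) (of_real t) * \<psi> (real i))"
proof -
  define q where "q = (\<Sum>i<n. smult (\<psi> (real i)) (lag n i))"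
  define \<phi> where "\<phi> = (\<lambda>t. \<psi> t - poly q (of_real t))"
  have "\<phi> t = 0"
  proof (rule frechet0)
    show "continuous_on UNIV \<phi>" unfolding \<phi>_def
      by (intro continuous_intros cont continuous_on_poly) 
    fix h
    have "(Dlt (\<lambda>t. t + h) ^^ n) (\<lambda>t. poly q (of_real t)) = (\<lambda>t. ((Dlt (\<lambda>z. z + of_real h) ^^ n) (poly q)) (of_real t))"
      by (rule Dlt_pow_comp) simp
    also have "\<dots> = (\<lambda>t. 0)" unfolding q_def using poly_kill[OF interp_degree] by simp
    finally show "(Dlt (\<lambda>t. t + h) ^^ n) \<phi> = (\<lambda>t. 0)"
      unfolding \<phi>_def Dlt_pow_diff using D by simp
  next
    fix i assume "i < n"
    then show "\<phi> (real i) = 0"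
      using interp_eval[of i n "\<lambda>i. \<psi> (real i)"] by (simp add: \<phi>_def q_def)
  qed
  then show ?thesis by (simp add: \<phi>_def q_def poly_sum mult.commute)
qed

lemma sum_fun_apply: "(sum f A) x = (\<Sum>a\<in>A. f a x)"
  by (induction A rule: infinite_finite_induct) auto

interpretation fvs: vector_space "(\<lambda>(c::complex) (f::'a\<Rightarrow>complex) x. c * f x)"
  by unfold_locales (auto simp: algebra_simps fun_eq_iff)

lemma rot_minv:
  fixes U :: "real^'n^'n"
  assumes "rotation_matrix U"
  shows "matrix_inv U = transpose U"
proof -
  have o: "U ** transpose U = mat 1" "transpose U ** U = mat 1"
    using assms by (auto simp: rotation_matrix_def orthogonal_matrix_def)
  let ?P = "\<lambda>A'. U ** A' = mat 1 \<and> A' ** U = mat 1"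
  have "?P (transpose U)" using o by simp
  then have P: "?P (matrix_inv U)" unfolding matrix_inv_def by (rule someI)
  have "matrix_inv U = matrix_inv U ** (U ** transpose U)" using o by (simp add: matrix_mul_rid)
  also have "\<dots> = (matrix_inv U ** U) ** transpose U" by (simp add: matrix_mul_assoc)
  also have "\<dots> = transpose U" using P by (simp add: matrix_mul_lid)
  finally show ?thesis .
qed

lemma rot_transpose:
  fixes U :: "real^'n^'n"
  shows "rotation_matrix U \<Longrightarrow> rotation_matrix (transpose U)"
  by (simp add: rotation_matrix_def det_transpose)

definition ev :: "'v::real_vector \<Rightarrow> complex poly \<Rightarrow> ('v \<Rightarrow> complex) \<Rightarrow> ('v \<Rightarrow> complex)" where
  "ev a p h = (\<lambda>x. \<Sum>j\<le>degree p. coeff p j * h (x + real j *\<^sub>R a))"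

lemma ev_bound:
  assumes "degree p \<le> N"
  shows "ev a p h x = (\<Sum>j\<le>N. coeff p j * h (x + real j *\<^sub>R a))"
  unfolding ev_def using assms
  by (intro sum.mono_neutral_left) (auto simp: coeff_eq_0)

lemma ev_pCons: "ev a (pCons c p) h x = c * h x + ev a p h (x + a)"
proof -
  have "ev a (pCons c p) h x = (\<Sum>j\<le>Suc (degree p). coeff (pCons c p) j * h (x + real j *\<^sub>R a))"
    by (rule ev_bound) (simp add: degree_pCons_le)
  also have "\<dots> = c * h x + (\<Sum>j\<le>degree p. coeff p j * h (x + real (Suc j) *\<^sub>R a))"
    by (subst sum.atMost_Suc_shift) simp
  also have "(\<Sum>j\<le>degree p. coeff p j * h (x + real (Suc j) *\<^sub>R a)) = ev a p h (x + a)"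
    unfolding ev_def by (intro sum.cong refl) (simp add: algebra_simps)
  finally show ?thesis .
qed

lemma ev_0 [simp]: "ev a 0 h = (\<lambda>x. 0)"
  by (simp add: ev_def)

lemma ev_add: "ev a (p + q) h x = ev a p h x + ev a q h x"
proof -
  let ?N = "max (degree p) (degree q)"
  have "ev a (p + q) h x = (\<Sum>j\<le>?N. coeff (p + q) j * h (x + real j *\<^sub>R a))"
    by (rule ev_bound) (simp add: degree_add_le)
  also have "\<dots> = (\<Sum>j\<le>?N. coeff p j * h (x + real j *\<^sub>R a)) + (\<Sum>j\<le>?N. coeff q j * h (x + real j *\<^sub>R a))"
    by (simp add: sum.distrib algebra_simps)
  also have "\<dots> = ev a p h x + ev a q h x"
    using ev_bound[of p ?N a h x] ev_bound[of q ?N a h x] by simp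
  finally show ?thesis .
qed

lemma ev_smult: "ev a (smult c p) h x = c * ev a p h x"
proof -
  have "ev a (smult c p) h x = (\<Sum>j\<le>degree p. coeff (smult c p) j * h (x + real j *\<^sub>R a))"
    by (rule ev_bound) (simp add: degree_smult_le)
  also have "\<dots> = c * ev a p h x" by (simp add: ev_def sum_distrib_left mult.assoc)
  finally show ?thesis .
qed

lemma ev_mult: "ev a (p * q) h = ev a p (ev a q h)"
proof (induction p rule: pCons_induct)
  case 0
  then show ?case by (simp add: fun_eq_iff)
next
  case (pCons c p)
  show ?case
  proof
    fix x
    have "ev a (pCons c p * q) h x = ev a (smult c q + pCons 0 (p * q)) h x" by simp
    also have "\<dots> = c * ev a q h x + ev a (p * q) h (x + a)"
      by (simp add: ev_add ev_smult ev_pCons)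
    also have "\<dots> = ev a (pCons c p) (ev a q h) x"
      using pCons.IH by (simp add: ev_pCons)
    finally show "ev a (pCons c p * q) h x = ev a (pCons c p) (ev a q h) x" .
  qed
qed

lemma ev_lin: "ev a [:- z, 1:] h = (\<lambda>x. h (x + a) - z * h x)"
  by (simp add: fun_eq_iff ev_pCons)

lemma ev_const: "ev a [:c:] h = (\<lambda>x. c * h x)"
  by (simp add: fun_eq_iff ev_pCons)

lemma ev_zero_fun: "ev a p (\<lambda>x. 0) = (\<lambda>x. 0)"
  by (simp add: ev_def fun_eq_iff)

lemma ev_in:
  assumes "fvs.subspace K" "\<And>h. h \<in> K \<Longrightarrow> (\<lambda>x. h (x + a)) \<in> K" "h \<in> K"
  shows "ev a p h \<in> K"
proof (induction p rule: pCons_induct)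
  case 0
  then show ?case using fvs.subspace_0[OF assms(1)] by (simp add: zero_fun_def)
next
  case (pCons c p)
  have "ev a (pCons c p) h = (\<lambda>x. c * h x) + (\<lambda>x. ev a p h (x + a))"
    by (simp add: fun_eq_iff ev_pCons)
  moreover have "(\<lambda>x. c * h x) \<in> K" using fvs.subspace_scale[OF assms(1) assms(3)] by simp
  moreover have "(\<lambda>x. ev a p h (x + a)) \<in> K" using assms(2) pCons.IH by simp
  ultimately show ?case using fvs.subspace_add[OF assms(1)] by metis
qed

lemma Dlt_ev: "(Dlt (\<lambda>x. x + a) ^^ m) g = ev a ([:-1, 1:] ^ m) g"
proof (induction m)
  case 0
  then show ?case by (simp add: ev_def fun_eq_iff)
next
  case (Suc m)
  have "(Dlt (\<lambda>x. x + a) ^^ Suc m) g = Dlt (\<lambda>x. x + a) (ev a ([:-1, 1:] ^ m) g)" using Suc by simp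
  also have "\<dots> = ev a [:-1, 1:] (ev a ([:-1, 1:] ^ m) g)" by (simp add: Dlt_def ev_lin)
  also have "\<dots> = ev a ([:-1, 1:] ^ Suc m) g" by (simp only: ev_mult[symmetric] power_Suc)
  finally show ?case .
qed

locale tinv =
  fixes E :: "(real^'n \<Rightarrow> complex) set" and l :: nat
  assumes card2: "CARD('n) \<ge> 2"
    and cont: "\<And>f. f \<in> E \<Longrightarrow> continuous_on UNIV f"
    and sub: "fvs.subspace E"
    and spanB: "\<exists>B. finite B \<and> card B = l \<and> E \<subseteq> fvs.span B"
    and trans: "\<And>f a. f \<in> E \<Longrightarrow> (\<lambda>x. f (x + a)) \<in> E"
    and rot: "\<And>f W. f \<in> E \<Longrightarrow> rotation_matrix W \<Longrightarrow> (\<lambda>x. f (W *v x)) \<in> E"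
begin

lemma indep_card:
  assumes "fvs.independent T" "T \<subseteq> E"
  shows "finite T \<and> card T \<le> l"
proof -
  obtain B where B: "finite B" "card B = l" "E \<subseteq> fvs.span B" using spanB by blast
  show ?thesis using fvs.independent_span_bound[OF B(1) assms(1)] assms(2) B by auto
qed

lemma dep:
  fixes v :: "nat \<Rightarrow> real^'n \<Rightarrow> complex"
  assumes "\<And>j. j \<le> l \<Longrightarrow> v j \<in> E"
  shows "\<exists>c. (\<exists>j\<le>l. c j \<noteq> 0) \<and> (\<forall>x. (\<Sum>j\<le>l. c j * v j x) = 0)"
proof (cases "inj_on v {..l}")
  case False
  then obtain i j where ij: "i \<le> l" "j \<le> l" "i \<noteq> j" "v i = v j"
    unfolding inj_on_def by auto
  define c where "c = (\<lambda>k. (if k = i then 1 else 0) - (if k = j then 1 else (0::complex)))"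
  have "(\<Sum>k\<le>l. c k * v k x) = 0" for x
  proof -
    have e: "c k * v k x = (if k = i then v i x else 0) - (if k = j then v j x else 0)" for k
      using ij(3) by (auto simp: c_def)
    have "(\<Sum>k\<le>l. c k * v k x) = (\<Sum>k\<le>l. (if k = i then v i x else 0)) - (\<Sum>k\<le>l. (if k = j then v j x else 0))"
      by (simp only: e sum_subtractf)
    also have "\<dots> = 0" using ij by (simp add: sum.delta)
    finally show ?thesis .
  qed
  moreover have "c i \<noteq> 0" using ij by (simp add: c_def)
  ultimately show ?thesis using ij by blast
next
  case True
  define V where "V = v ` {..l}"
  have cardV: "card V = Suc l" using True by (simp add: V_def card_image)
  have VE: "V \<subseteq> E" using assms by (auto simp: V_def)
  have "fvs.dependent V"
  proof (rule ccontr)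
    assume "\<not> fvs.dependent V"
    then show False using indep_card[OF _ VE] cardV by simp
  qed
  moreover have "finite V" by (simp add: V_def)
  ultimately obtain u where u: "\<exists>w\<in>V. u w \<noteq> 0" "(\<Sum>w\<in>V. (\<lambda>x. u w * w x)) = 0"
    using fvs.dependent_finite by blast
  define c where "c = (\<lambda>k. u (v k))"
  have "(\<Sum>j\<le>l. c j * v j x) = 0" for x
  proof -
    have "(\<Sum>j\<le>l. c j * v j x) = (\<Sum>w\<in>V. u w * w x)"
      unfolding V_def c_def using True by (simp add: sum.reindex)
    also have "\<dots> = (\<Sum>w\<in>V. (\<lambda>x. u w * w x)) x" by (simp add: sum_fun_apply)
    also have "\<dots> = 0" using u(2) by simp
    finally show ?thesis .
  qed
  moreover have "\<exists>j\<le>l. c j \<noteq> 0" using u(1) by (auto simp: V_def c_def)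
  ultimately show ?thesis by blast
qed

lemma annih:
  assumes "h0 \<in> E"
  shows "\<exists>p. p \<noteq> 0 \<and> degree p \<le> l \<and> ev b p h0 = (\<lambda>x. 0)"
proof -
  obtain c where c: "\<exists>j\<le>l. c j \<noteq> 0" "\<forall>x. (\<Sum>j\<le>l. c j * h0 (x + real j *\<^sub>R b)) = 0"
    using dep[of "\<lambda>j x. h0 (x + real j *\<^sub>R b)"] trans[OF assms] by auto
  define p where "p = Poly (map c [0..<Suc l])"
  have cp: "coeff p j = (if j \<le> l then c j else 0)" for j
    by (auto simp: p_def nth_default_def simp del: upt_Suc)
  have dp: "degree p \<le> l" by (rule degree_le) (simp add: cp)
  have "p \<noteq> 0" using c(1) cp by (metis coeff_0)
  moreover have "ev b p h0 = (\<lambda>x. 0)"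
  proof
    fix x
    show "ev b p h0 x = 0" using ev_bound[OF dp, of b h0 x] c(2) by (simp add: cp)
  qed
  ultimately show ?thesis using dp by blast
qed

lemma eig_key:
  assumes K: "K \<subseteq> E" "fvs.subspace K" "\<And>h. h \<in> K \<Longrightarrow> (\<lambda>x. h (x + b)) \<in> K"
  shows "h \<in> K \<Longrightarrow> h \<noteq> (\<lambda>x. 0) \<Longrightarrow> p \<noteq> 0 \<Longrightarrow> ev b p h = (\<lambda>x. 0) \<Longrightarrow>
      \<exists>\<mu> h. h \<in> K \<and> h \<noteq> (\<lambda>x. 0) \<and> (\<forall>x. h (x + b) = \<mu> * h x)"
proof (induction "degree p" arbitrary: p h rule: less_induct)
  case (less p h)
  show ?case
  proof (cases "degree p = 0")
    case True
    then obtain c where pc: "p = [:c:]" by (metis degree_eq_zeroE)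
    then have "c \<noteq> 0" using less.prems(3) by simp
    then have "h = (\<lambda>x. 0)" using less.prems(4) by (simp add: pc ev_const fun_eq_iff)
    then show ?thesis using less.prems(2) by simp
  next
    case False
    then have "\<not> constant (poly p)" by (simp add: constant_degree)
    then obtain z where "poly p z = 0" using fundamental_theorem_of_algebra by blast
    then obtain q where pq: "p = [:-z, 1:] * q" using poly_eq_0_iff_dvd by (metis dvdE)
    have q0: "q \<noteq> 0" using less.prems(3) pq by auto
    have "degree p = degree [:-z, 1:] + degree q" unfolding pq
      by (rule degree_mult_eq) (use q0 in auto)
    then have dq: "degree q < degree p" by simp
    define h' where "h' = ev b [:-z, 1:] h"
    have h'K: "h' \<in> K" unfolding h'_def by (rule ev_in[OF K(2) K(3) less.prems(1)])
    show ?thesis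
    proof (cases "h' = (\<lambda>x. 0)")
      case True
      then have "\<forall>x. h (x + b) = z * h x" by (simp add: h'_def ev_lin fun_eq_iff)
      then show ?thesis using less.prems(1,2) by blast
    next
      case False
      have "ev b q h' = ev b (q * [:-z, 1:]) h" by (simp only: h'_def ev_mult)
      also have "\<dots> = ev b p h" by (simp add: pq mult.commute)
      finally have "ev b q h' = (\<lambda>x. 0)" using less.prems(4) by simp
      then show ?thesis using less.hyps[OF dq h'K False q0] by blast
    qed
  qed
qed

lemma eig_exists:
  assumes K: "K \<subseteq> E" "fvs.subspace K" "\<And>h. h \<in> K \<Longrightarrow> (\<lambda>x. h (x + b)) \<in> K"
    and h0: "h0 \<in> K" "h0 \<noteq> (\<lambda>x. 0)"
  shows "\<exists>\<mu> h. h \<in> K \<and> h \<noteq> (\<lambda>x. 0) \<and> (\<forall>x. h (x + b) = \<mu> * h x)"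
proof -
  obtain p where p: "p \<noteq> 0" "ev b p h0 = (\<lambda>x. 0)" using annih[of h0] h0 K(1) by blast
  show ?thesis using eig_key[OF K h0 p] .
qed

end

lemma eig_subspace:
  assumes "fvs.subspace K"
  shows "fvs.subspace {g\<in>K. \<forall>x. g (x + b) = \<mu> * g x}"
proof (rule fvs.subspaceI)
  show "0 \<in> {g\<in>K. \<forall>x. g (x + b) = \<mu> * g x}" using fvs.subspace_0[OF assms] by simp
next
  fix g1 g2 assume "g1 \<in> {g\<in>K. \<forall>x. g (x + b) = \<mu> * g x}" "g2 \<in> {g\<in>K. \<forall>x. g (x + b) = \<mu> * g x}"
  then show "g1 + g2 \<in> {g\<in>K. \<forall>x. g (x + b) = \<mu> * g x}"
    using fvs.subspace_add[OF assms] by (auto simp: algebra_simps)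
next
  fix c g1 assume "g1 \<in> {g\<in>K. \<forall>x. g (x + b) = \<mu> * g x}"
  then show "(\<lambda>x. c * g1 x) \<in> {g\<in>K. \<forall>x. g (x + b) = \<mu> * g x}"
    using fvs.subspace_scale[OF assms] by auto
qed

lemma artin:
  fixes C :: "('a::ab_group_add \<Rightarrow> complex) set"
  assumes "finite C" "\<forall>c\<in>C. (\<forall>x y. c (x + y) = c x * c y) \<and> c 0 = 1"
    "\<forall>x. (\<Sum>c\<in>C. u c * c x) = 0"
  shows "\<forall>c\<in>C. u c = 0"
  using assms
proof (induction C arbitrary: u rule: finite_induct)
  case empty
  then show ?case by simp
next
  case (insert d C)
  have chd: "\<forall>x y. d (x + y) = d x * d y" "d 0 = 1" using insert.prems by auto
  have chC: "\<forall>c\<in>C. (\<forall>x y. c (x + y) = c x * c y) \<and> c 0 = 1" using insert.prems by auto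
  have eq: "u d * d x + (\<Sum>c\<in>C. u c * c x) = 0" for x
    using insert.prems(2) insert.hyps by simp
  have cy: "\<forall>c\<in>C. u c * (c y - d y) = 0" for y
  proof (rule insert.IH[OF chC], rule allI)
    fix x
    have "u d * d (x + y) + (\<Sum>c\<in>C. u c * c (x + y)) = 0" by (rule eq)
    then have 1: "u d * d x * d y + (\<Sum>c\<in>C. u c * c x * c y) = 0"
      using chd chC by (simp add: mult.assoc)
    have 2: "u d * d x * d y + (\<Sum>c\<in>C. u c * c x * d y) = 0"
      using eq[of x] by (simp add: sum_distrib_right[symmetric] distrib_right[symmetric])
    have "(\<Sum>c\<in>C. u c * (c y - d y) * c x) = (\<Sum>c\<in>C. u c * c x * c y - u c * c x * d y)"
      by (rule sum.cong) (simp_all add: algebra_simps)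
    also have "\<dots> = (\<Sum>c\<in>C. u c * c x * c y) - (\<Sum>c\<in>C. u c * c x * d y)"
      by (rule sum_subtractf)
    also have "\<dots> = 0"
    proof -
      have "u d * d x * d y + (\<Sum>c\<in>C. u c * c x * c y) = u d * d x * d y + (\<Sum>c\<in>C. u c * c x * d y)"
        by (simp only: 1 2)
      then have "(\<Sum>c\<in>C. u c * c x * c y) = (\<Sum>c\<in>C. u c * c x * d y)"
        by (simp only: add_left_cancel)
      then show ?thesis by simp
    qed
    finally show "(\<Sum>c\<in>C. u c * (c y - d y) * c x) = 0" .
  qed
  then have uC: "\<forall>c\<in>C. u c = 0"
  proof (intro ballI)
    fix c assume cC: "c \<in> C"
    have "c \<noteq> d" using cC insert.hyps by auto
    then obtain y where "c y \<noteq> d y" by auto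
    then show "u c = 0" using cy[of y] cC by auto
  qed
  then have "u d * d 0 = 0" using eq[of 0] by simp
  then have "u d = 0" using chd by simp
  then show ?case using uC by simp
qed

context tinv begin

lemma dim_psub:
  assumes "K' \<subseteq> K" "K' \<noteq> K" "K \<subseteq> E" "fvs.subspace K'"
  shows "fvs.dim K' < fvs.dim K"
proof -
  obtain B' where B': "B' \<subseteq> K'" "fvs.independent B'" "K' \<subseteq> fvs.span B'" "card B' = fvs.dim K'"
    using fvs.basis_exists by blast
  obtain v where v: "v \<in> K" "v \<notin> K'" using assms(1,2) by blast
  have "fvs.span B' \<subseteq> K'" using B'(1) assms(4) by (rule fvs.span_minimal)
  then have "v \<notin> fvs.span B'" using v by blast
  then have ind: "fvs.independent (insert v B')" using B'(2) by (rule fvs.independent_insertI)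
  obtain BK where BK: "BK \<subseteq> K" "fvs.independent BK" "K \<subseteq> fvs.span BK" "card BK = fvs.dim K"
    using fvs.basis_exists by blast
  have fBK: "finite BK" using indep_card[OF BK(2)] BK(1) assms(3) by auto
  have "insert v B' \<subseteq> fvs.span BK" using v(1) B'(1) assms(1) BK(3) by auto
  then have fc: "finite (insert v B') \<and> card (insert v B') \<le> card BK"
    by (rule fvs.independent_span_bound[OF fBK ind])
  have "v \<notin> B'" using v B'(1) by blast
  moreover have "finite B'" using fc by simp
  ultimately have "card (insert v B') = Suc (card B')" by simp
  then show ?thesis using fc B'(4) BK(4) by linarith
qed

lemma joint:
  assumes "h0 \<in> E" "h0 \<noteq> (\<lambda>x. 0)" "\<forall>x. h0 (x + a) = \<zeta> * h0 x"
  shows "\<exists>h\<in>E. h \<noteq> (\<lambda>x. 0) \<and> (\<forall>b. \<exists>\<beta>. \<forall>x. h (x + b) = \<beta> * h x) \<and> (\<forall>x. h (x + a) = \<zeta> * h x)"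
proof -
  define fam where "fam K \<longleftrightarrow> K \<subseteq> E \<and> fvs.subspace K \<and> (\<exists>h\<in>K. h \<noteq> (\<lambda>x. 0))
      \<and> (\<forall>b. \<forall>h\<in>K. (\<lambda>x. h (x + b)) \<in> K) \<and> (\<forall>h\<in>K. \<forall>x. h (x + a) = \<zeta> * h x)" for K
  define K0 where "K0 = {h\<in>E. \<forall>x. h (x + a) = \<zeta> * h x}"
  have "fam K0"
    unfolding fam_def
  proof (intro conjI allI ballI)
    show "K0 \<subseteq> E" by (auto simp: K0_def)
    show "fvs.subspace K0" unfolding K0_def by (rule eig_subspace[OF sub])
    show "\<exists>h\<in>K0. h \<noteq> (\<lambda>x. 0)" using assms by (auto simp: K0_def)
    fix b h assume h: "h \<in> K0"
    have "h (x + b + a) = \<zeta> * h (x + b)" for x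
      using h by (auto simp: K0_def)
    then show "(\<lambda>x. h (x + b)) \<in> K0"
      using h trans[of h b] by (auto simp: K0_def add.commute add.left_commute)
  next
    fix h x assume "h \<in> K0"
    then show "h (x + a) = \<zeta> * h x" by (auto simp: K0_def)
  qed
  then obtain K where K: "fam K" and Kmin: "\<And>K'. fam K' \<Longrightarrow> fvs.dim K \<le> fvs.dim K'"
    using ex_has_least_nat[of fam K0 fvs.dim] by blast
  have KE: "K \<subseteq> E" and Ks: "fvs.subspace K" and Ki: "\<And>b h. h \<in> K \<Longrightarrow> (\<lambda>x. h (x + b)) \<in> K"
    and Kz: "\<And>h x. h \<in> K \<Longrightarrow> h (x + a) = \<zeta> * h x"
    using K by (auto simp: fam_def)
  obtain h where h: "h \<in> K" "h \<noteq> (\<lambda>x. 0)" using K by (auto simp: fam_def)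
  have "\<exists>\<beta>. \<forall>x. h (x + b) = \<beta> * h x" for b
  proof -
    obtain \<mu> h1 where h1: "h1 \<in> K" "h1 \<noteq> (\<lambda>x. 0)" "\<forall>x. h1 (x + b) = \<mu> * h1 x"
      using eig_exists[OF KE Ks Ki h] by blast
    define K' where "K' = {g\<in>K. \<forall>x. g (x + b) = \<mu> * g x}"
    have "fam K'"
      unfolding fam_def
    proof (intro conjI allI ballI)
      show "K' \<subseteq> E" using KE by (auto simp: K'_def)
      show "fvs.subspace K'" unfolding K'_def by (rule eig_subspace[OF Ks])
      show "\<exists>h\<in>K'. h \<noteq> (\<lambda>x. 0)" using h1 by (auto simp: K'_def)
      fix c g assume g: "g \<in> K'"
      have "g (x + c + b) = \<mu> * g (x + c)" for x
        using g by (auto simp: K'_def)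
      then show "(\<lambda>x. g (x + c)) \<in> K'"
        using g Ki[of g c] by (auto simp: K'_def add.commute add.left_commute)
    next
      fix g x assume "g \<in> K'"
      then show "g (x + a) = \<zeta> * g x" using Kz by (auto simp: K'_def)
    qed
    have "K' = K"
    proof (rule ccontr)
      assume "K' \<noteq> K"
      then have "fvs.dim K' < fvs.dim K"
        using dim_psub[of K' K] KE eig_subspace[OF Ks] by (auto simp: K'_def)
      then show False using Kmin[OF \<open>fam K'\<close>] by simp
    qed
    then show ?thesis using h(1) by (auto simp: K'_def)
  qed
  then have "\<forall>b. \<exists>\<beta>. \<forall>x. h (x + b) = \<beta> * h x" by blast
  moreover have "h \<in> E" using KE h(1) by blast
  moreover have "\<forall>x. h (x + a) = \<zeta> * h x" using Kz h(1) by blast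
  ultimately show ?thesis using h(2) by blast
qed

end

context tinv begin

lemma char_one:
  assumes chiE: "ch \<in> E" and mul: "\<And>x y. ch (x + y) = ch x * ch y" and one: "ch 0 = 1"
  shows "ch x = 1"
proof -
  define R where "R = (\<lambda>W. (\<lambda>x. ch (W *v x))) ` {W. rotation_matrix W}"
  have RE: "R \<subseteq> E" using rot chiE by (auto simp: R_def)
  have Rch: "\<forall>c\<in>R. (\<forall>x y. c (x + y) = c x * c y) \<and> c 0 = 1"
    by (auto simp: R_def matrix_vector_right_distrib mul one)
  have finR: "finite R"
  proof (rule ccontr)
    assume "infinite R"
    then obtain S where S: "finite S" "card S = Suc l" "S \<subseteq> R"
      using infinite_arbitrarily_large by blast
    have "\<not> fvs.dependent S"
      unfolding fvs.dependent_finite[OF S(1)]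
    proof
      assume "\<exists>u. (\<exists>v\<in>S. u v \<noteq> 0) \<and> (\<Sum>v\<in>S. (\<lambda>x. u v * v x)) = 0"
      then obtain u where u: "\<exists>v\<in>S. u v \<noteq> 0" "(\<Sum>v\<in>S. (\<lambda>x. u v * v x)) = 0" by blast
      have "\<forall>x. (\<Sum>c\<in>S. u c * c x) = 0"
      proof
        fix x
        have "(\<Sum>c\<in>S. u c * c x) = (\<Sum>v\<in>S. (\<lambda>x. u v * v x)) x" by (simp add: sum_fun_apply)
        also have "\<dots> = 0" using u(2) by simp
        finally show "(\<Sum>c\<in>S. u c * c x) = 0" .
      qed
      moreover have "\<forall>c\<in>S. (\<forall>x y. c (x + y) = c x * c y) \<and> c 0 = 1" using Rch S(3) by blast
      ultimately have "\<forall>c\<in>S. u c = 0" using artin[OF S(1)] by blast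
      then show False using u(1) by blast
    qed
    then show False using indep_card[of S] S RE by auto
  qed
  have sph: "ch c = ch a" if "norm c = norm a" for a c
  proof -
    have sub1: "ch ` sphere 0 (norm a) \<subseteq> (\<lambda>f. f a) ` R"
    proof
      fix y assume "y \<in> ch ` sphere 0 (norm a)"
      then obtain c' where c': "norm c' = norm a" "y = ch c'" by auto
      obtain f where f: "orthogonal_transformation f" "det (matrix f) = 1" "f a = c'"
        using rotation_exists[OF card2, of a c'] c'(1) by metis
      have rm: "rotation_matrix (matrix f)"
        using f by (simp add: rotation_matrix_def orthogonal_transformation_matrix)
      have lf: "Vector_Spaces.linear (*s) (*s) f"
        using linear.axioms[OF orthogonal_transformation_linear[OF f(1)]] unfolding scalar_mult_eq_scaleR .
      have mv: "matrix f *v a = c'"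
        using f(3) matrix_works[OF lf] by simp
      have "(\<lambda>x. ch (matrix f *v x)) \<in> R" unfolding R_def using rm by blast
      moreover have "y = (\<lambda>x. ch (matrix f *v x)) a" using mv c'(2) by simp
      ultimately show "y \<in> (\<lambda>f. f a) ` R" using image_eqI[of y "\<lambda>g. g a" "\<lambda>x. ch (matrix f *v x)" R] by simp
    qed
    have fin: "finite (ch ` sphere 0 (norm a))" using finR sub1 finite_subset by blast
    have "2 \<le> DIM(real^'n)" using card2 by simp
    then have "connected (sphere (0::real^'n) (norm a))" by (rule connected_sphere)
    then have conn: "connected (ch ` sphere 0 (norm a))"
      by (rule connected_continuous_image[rotated]) (rule continuous_on_subset[OF cont[OF chiE]], simp)
    have ina: "a \<in> sphere 0 (norm a)" "c \<in> sphere 0 (norm a)" using that by auto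
    obtain z where z: "ch ` sphere 0 (norm a) = {z}"
      using connected_finite_iff_sing[OF conn] fin ina by auto
    have "ch c \<in> {z}" "ch a \<in> {z}" using ina by (simp_all only: z[symmetric] imageI)
    then show ?thesis by simp
  qed
  have sq: "ch y * ch y = 1" for y
  proof -
    have "ch (-y) = ch y" using sph[of "-y" y] by simp
    then show ?thesis using mul[of y "-y"] one by simp
  qed
  have "x = (1/2) *\<^sub>R x + (1/2) *\<^sub>R x" by (simp add: scaleR_add_left[symmetric])
  then have "ch x = ch ((1/2) *\<^sub>R x) * ch ((1/2) *\<^sub>R x)" using mul by metis
  then show ?thesis using sq by simp
qed

lemma no_eig:
  assumes "h \<in> E" "\<forall>x. h (x + a) = \<zeta> * h x" "\<zeta> \<noteq> 1"
  shows "h = (\<lambda>x. 0)"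
proof (rule ccontr)
  assume h0: "h \<noteq> (\<lambda>x. 0)"
  obtain h1 where h1: "h1 \<in> E" "h1 \<noteq> (\<lambda>x. 0)" "\<forall>b. \<exists>\<beta>. \<forall>x. h1 (x + b) = \<beta> * h1 x"
      "\<forall>x. h1 (x + a) = \<zeta> * h1 x"
    using joint[OF assms(1) h0 assms(2)] by blast
  have nz: "h1 0 \<noteq> 0"
  proof
    assume z: "h1 0 = 0"
    have "h1 b = 0" for b
    proof -
      obtain \<beta> where "\<forall>x. h1 (x + b) = \<beta> * h1 x" using h1(3) by blast
      then have "h1 (0 + b) = \<beta> * h1 0" by blast
      then show ?thesis using z by simp
    qed
    then show False using h1(2) by auto
  qed
  define ch where "ch = (\<lambda>x. inverse (h1 0) * h1 x)"
  have chiE: "ch \<in> E" using fvs.subspace_scale[OF sub h1(1), of "inverse (h1 0)"] by (simp add: ch_def)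
  have mulh: "h1 (x + y) = h1 y * h1 x / h1 0" for x y
  proof -
    obtain \<beta> where \<beta>: "\<forall>x. h1 (x + y) = \<beta> * h1 x" using h1(3) by blast
    have "h1 (0 + y) = \<beta> * h1 0" using \<beta> by blast
    then have "\<beta> = h1 y / h1 0" using nz by (simp add: field_simps)
    then show ?thesis using \<beta> by simp
  qed
  have "ch (x + y) = ch x * ch y" for x y using nz by (simp add: ch_def mulh field_simps)
  moreover have "ch 0 = 1" using nz by (simp add: ch_def)
  ultimately have "ch a = 1" using char_one[OF chiE] by blast
  then have "h1 a = h1 0" using nz by (simp add: ch_def field_simps)
  moreover have "h1 (0 + a) = \<zeta> * h1 0" using h1(4) by blast
  ultimately have "\<zeta> * h1 0 = 1 * h1 0" by simp
  then show False using nz assms(3) by (simp only: mult_cancel_right) simp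
qed

lemma ev_one: "ev a 1 g = g"
  by (simp add: ev_def fun_eq_iff)

lemma unip_key:
  shows "g \<in> E \<Longrightarrow> p \<noteq> 0 \<Longrightarrow> ev a p g = (\<lambda>x. 0) \<Longrightarrow> ev a ([:-1, 1:] ^ degree p) g = (\<lambda>x. 0)"
proof (induction "degree p" arbitrary: p g rule: less_induct)
  case (less p g)
  show ?case
  proof (cases "degree p = 0")
    case True
    then obtain c where pc: "p = [:c:]" by (metis degree_eq_zeroE)
    then have "c \<noteq> 0" using less.prems(2) by simp
    then have "g = (\<lambda>x. 0)" using less.prems(3) by (simp add: pc ev_const fun_eq_iff)
    then show ?thesis using True by (simp add: ev_one)
  next
    case False
    then have "\<not> constant (poly p)" by (simp add: constant_degree)
    then obtain z where "poly p z = 0" using fundamental_theorem_of_algebra by blast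
    then obtain q where pq: "p = [:-z, 1:] * q" using poly_eq_0_iff_dvd by (metis dvdE)
    have q0: "q \<noteq> 0" using less.prems(2) pq by auto
    have "degree p = degree [:-z, 1:] + degree q" unfolding pq
      by (rule degree_mult_eq) (use q0 in auto)
    then have dp: "degree p = Suc (degree q)" by simp
    have EK: "\<And>h. h \<in> E \<Longrightarrow> (\<lambda>x. h (x + a)) \<in> E" using trans by blast
    show ?thesis
    proof (cases "z = 1")
      case True
      define g' where "g' = ev a [:-1, 1:] g"
      have g'E: "g' \<in> E" unfolding g'_def by (rule ev_in[OF sub EK less.prems(1)])
      have "ev a q g' = ev a (q * [:-1, 1:]) g" by (simp only: g'_def ev_mult)
      also have "\<dots> = ev a p g" using True by (simp add: pq mult.commute)
      finally have "ev a q g' = (\<lambda>x. 0)" using less.prems(3) by simp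
      then have IH: "ev a ([:-1, 1:] ^ degree q) g' = (\<lambda>x. 0)"
        using less.hyps[of q g'] dp g'E q0 by simp
      have "ev a ([:-1, 1:] ^ degree p) g = ev a ([:-1, 1:] ^ degree q * [:-1, 1:]) g"
        by (simp only: dp power_Suc2)
      also have "\<dots> = (\<lambda>x. 0)" using IH by (simp only: ev_mult g'_def)
      finally show ?thesis .
    next
      case False
      define w where "w = ev a q g"
      have wE: "w \<in> E" unfolding w_def by (rule ev_in[OF sub EK less.prems(1)])
      have "ev a [:-z, 1:] w = ev a p g" by (simp only: w_def pq ev_mult)
      then have "\<forall>x. w (x + a) = z * w x" using less.prems(3) by (simp add: ev_lin fun_eq_iff)
      then have "w = (\<lambda>x. 0)" using no_eig[OF wE _ False] by blast
      then have IH: "ev a ([:-1, 1:] ^ degree q) g = (\<lambda>x. 0)"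
        using less.hyps[of q g] dp less.prems(1) q0 by (simp add: w_def)
      have "ev a ([:-1, 1:] ^ degree p) g = ev a ([:-1, 1:] * [:-1, 1:] ^ degree q) g"
        by (simp only: dp power_Suc)
      also have "\<dots> = (\<lambda>x. 0)" using IH by (simp only: ev_mult ev_zero_fun)
      finally show ?thesis .
    qed
  qed
qed

lemma unip:
  assumes "g \<in> E"
  shows "ev a ([:-1, 1:] ^ l) g = (\<lambda>x. 0)"
proof -
  obtain p where p: "p \<noteq> 0" "degree p \<le> l" "ev a p g = (\<lambda>x. 0)" using annih[OF assms] by blast
  have "ev a ([:-1, 1:] ^ l) g = ev a ([:-1, 1:] ^ (l - degree p) * [:-1, 1:] ^ degree p) g"
    using p(2) by (simp add: power_add[symmetric])
  also have "\<dots> = (\<lambda>x. 0)" using unip_key[OF assms p(1,3)] by (simp only: ev_mult ev_zero_fun)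
  finally show ?thesis .
qed

end

definition pt :: "'n set \<Rightarrow> real^'n \<Rightarrow> ('n \<Rightarrow> nat) \<Rightarrow> real^'n" where
  "pt S x \<beta> = (\<chi> j. if j \<in> S then real (\<beta> j) else x $ j)"

context tinv begin

lemma oneD:
  assumes "g \<in> E"
  shows "g y = (\<Sum>i<l. poly (lag l i) (of_real (y$k)) * g (y + (real i - y$k) *\<^sub>R axis k 1))"
proof -
  define z where "z = y - (y$k) *\<^sub>R axis k (1::real)"
  define \<psi> where "\<psi> = (\<lambda>t. g (z + t *\<^sub>R axis k 1))"
  have c\<psi>: "continuous_on UNIV \<psi>" unfolding \<psi>_def
    by (rule continuous_on_compose2[OF cont[OF assms]]) (auto intro!: continuous_intros)
  have D\<psi>: "(Dlt (\<lambda>t. t + h) ^^ l) \<psi> = (\<lambda>t. 0)" for h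
  proof -
    have "(Dlt (\<lambda>t. t + h) ^^ l) \<psi> = (\<lambda>t. ((Dlt (\<lambda>x. x + h *\<^sub>R axis k 1) ^^ l) g) (z + t *\<^sub>R axis k 1))"
      unfolding \<psi>_def by (rule Dlt_pow_comp) (simp add: scaleR_add_left algebra_simps)
    also have "\<dots> = (\<lambda>t. 0)" by (simp add: Dlt_ev unip[OF assms])
    finally show ?thesis .
  qed
  have "\<psi> (y$k) = (\<Sum>i<l. poly (lag l i) (of_real (y$k)) * \<psi> (real i))"
    by (rule frechet_lag[OF c\<psi> D\<psi>])
  moreover have "\<psi> (y$k) = g y" by (simp add: \<psi>_def z_def)
  moreover have "\<psi> (real i) = g (y + (real i - y$k) *\<^sub>R axis k 1)" for i
    by (simp add: \<psi>_def z_def algebra_simps scaleR_diff_left)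
  ultimately show ?thesis by simp
qed

lemma assemble:
  assumes "finite S" "g \<in> E"
  shows "g x = (\<Sum>\<beta>\<in>PiE S (\<lambda>_. {..<l}). (\<Prod>j\<in>S. poly (lag l (\<beta> j)) (of_real (x$j))) * g (pt S x \<beta>))"
  using assms(1)
proof (induction S rule: finite_induct)
  case empty
  have "pt {} x (\<lambda>_. undefined) = x" by (simp add: pt_def vec_eq_iff)
  then show ?case by simp
next
  case (insert k S)
  let ?T = "\<lambda>_::'n. {..<l}"
  let ?P = "\<lambda>\<beta>. (\<Prod>j\<in>S. poly (lag l (\<beta> j)) (of_real (x$j)))"
  define F where "F = (\<lambda>\<beta>. (\<Prod>j\<in>insert k S. poly (lag l (\<beta> j)) (of_real (x$j))) * g (pt (insert k S) x \<beta>))"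
  have step: "g (pt S x \<beta>) = (\<Sum>i<l. poly (lag l i) (of_real (x$k)) * g (pt (insert k S) x (\<beta>(k := i))))" for \<beta>
  proof -
    have k: "(pt S x \<beta>)$k = x$k" using insert.hyps by (simp add: pt_def)
    have "pt S x \<beta> + (real i - x$k) *\<^sub>R axis k 1 = pt (insert k S) x (\<beta>(k := i))" for i
      using insert.hyps by (auto simp: pt_def vec_eq_iff axis_def)
    then show ?thesis using oneD[OF assms(2), of "pt S x \<beta>" k] k by simp
  qed
  have "g x = (\<Sum>\<beta>\<in>PiE S ?T. ?P \<beta> * g (pt S x \<beta>))" by (rule insert.IH)
  also have "\<dots> = (\<Sum>\<beta>\<in>PiE S ?T. \<Sum>i<l. ?P \<beta> * (poly (lag l i) (of_real (x$k)) * g (pt (insert k S) x (\<beta>(k := i)))))"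
    by (simp add: step sum_distrib_left)
  also have "\<dots> = (\<Sum>\<beta>\<in>PiE S ?T. \<Sum>i<l. F (\<beta>(k := i)))"
  proof (intro sum.cong refl)
    fix \<beta> i assume "\<beta> \<in> PiE S ?T"
    have "(\<Prod>j\<in>insert k S. poly (lag l ((\<beta>(k := i)) j)) (of_real (x$j)))
        = poly (lag l i) (of_real (x$k)) * ?P \<beta>"
    proof -
      have e2: "(\<Prod>j\<in>S. poly (lag l ((\<beta>(k := i)) j)) (of_real (x$j))) = ?P \<beta>"
        using insert.hyps(2) by (intro prod.cong) auto
      show ?thesis
        by (subst prod.insert[OF insert.hyps]) (simp only: e2 fun_upd_same)
    qed
    then show "?P \<beta> * (poly (lag l i) (of_real (x$k)) * g (pt (insert k S) x (\<beta>(k := i)))) = F (\<beta>(k := i))"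
      by (simp add: F_def)
  qed
  also have "\<dots> = (\<Sum>i<l. \<Sum>\<beta>\<in>PiE S ?T. F (\<beta>(k := i)))" by (rule sum.swap)
  also have "\<dots> = (\<Sum>(i, \<beta>)\<in>?T k \<times> PiE S ?T. F (\<beta>(k := i)))" by (simp add: sum.cartesian_product)
  also have "\<dots> = sum (F \<circ> (\<lambda>(y, g). g(k := y))) (?T k \<times> PiE S ?T)"
    by (intro sum.cong refl) auto
  also have "\<dots> = sum F ((\<lambda>(y, g). g(k := y)) ` (?T k \<times> PiE S ?T))"
    by (rule sum.reindex[OF inj_combinator[OF insert.hyps(2)], symmetric])
  also have "\<dots> = sum F (PiE (insert k S) ?T)" by (simp only: PiE_insert_eq)
  finally show ?case by (simp add: F_def)
qed

lemma lag_expand: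
  assumes "i < l"
  shows "poly (lag l i) z = (\<Sum>a<l. coeff (lag l i) a * z ^ a)"
proof -
  have "poly (lag l i) z = (\<Sum>a\<le>degree (lag l i). coeff (lag l i) a * z ^ a)" by (rule poly_altdef)
  also have "\<dots> = (\<Sum>a<l. coeff (lag l i) a * z ^ a)"
    using lag_degree[OF assms] by (intro sum.mono_neutral_left) (auto simp: coeff_eq_0)
  finally show ?thesis .
qed

lemma poly_all:
  assumes "g \<in> E"
  shows "poly_fun_deg (CARD('n) * l) g"
proof -
  let ?T = "\<lambda>_::'n. {..<l}"
  let ?A = "{\<alpha>::'n \<Rightarrow> nat. (\<Sum>i\<in>UNIV. \<alpha> i) \<le> CARD('n) * l}"
  define C where "C = (\<lambda>i a. coeff (lag l i) a)"
  define M where "M = (\<lambda>(\<alpha>::'n \<Rightarrow> nat) (x::real^'n). (\<Prod>j\<in>UNIV. complex_of_real (x$j ^ \<alpha> j)))"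
  define vb where "vb = (\<lambda>\<beta>::'n \<Rightarrow> nat. (\<chi> j. real (\<beta> j)) :: real^'n)"
  define c where "c = (\<lambda>\<alpha>. if \<alpha> \<in> PiE UNIV ?T then (\<Sum>\<beta>\<in>PiE UNIV ?T. (\<Prod>j\<in>UNIV. C (\<beta> j) (\<alpha> j)) * g (vb \<beta>)) else 0)"
  have rep: "g x = (\<Sum>\<alpha>\<in>PiE UNIV ?T. c \<alpha> * M \<alpha> x)" for x
  proof -
    have "g x = (\<Sum>\<beta>\<in>PiE UNIV ?T. (\<Prod>j\<in>UNIV. poly (lag l (\<beta> j)) (of_real (x$j))) * g (pt UNIV x \<beta>))"
      by (rule assemble) (simp_all add: assms)
    also have "\<dots> = (\<Sum>\<beta>\<in>PiE UNIV ?T. (\<Sum>\<alpha>\<in>PiE UNIV ?T. (\<Prod>j\<in>UNIV. C (\<beta> j) (\<alpha> j)) * M \<alpha> x) * g (vb \<beta>))"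
    proof (intro sum.cong refl)
      fix \<beta> assume \<beta>: "\<beta> \<in> PiE UNIV ?T"
      have "(\<Prod>j\<in>UNIV. poly (lag l (\<beta> j)) (of_real (x$j))) = (\<Prod>j\<in>UNIV. \<Sum>a<l. C (\<beta> j) a * (of_real (x$j)) ^ a)"
        using \<beta> by (intro prod.cong refl) (auto simp: C_def intro!: lag_expand)
      also have "\<dots> = (\<Sum>\<alpha>\<in>PiE UNIV ?T. \<Prod>j\<in>UNIV. C (\<beta> j) (\<alpha> j) * (of_real (x$j)) ^ (\<alpha> j))"
        by (rule prod_sum_PiE) auto
      also have "\<dots> = (\<Sum>\<alpha>\<in>PiE UNIV ?T. (\<Prod>j\<in>UNIV. C (\<beta> j) (\<alpha> j)) * M \<alpha> x)"
        by (intro sum.cong refl) (simp add: M_def prod.distrib of_real_power)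
      finally show "(\<Prod>j\<in>UNIV. poly (lag l (\<beta> j)) (of_real (x$j))) * g (pt UNIV x \<beta>) =
          (\<Sum>\<alpha>\<in>PiE UNIV ?T. (\<Prod>j\<in>UNIV. C (\<beta> j) (\<alpha> j)) * M \<alpha> x) * g (vb \<beta>)"
        by (simp add: pt_def vb_def)
    qed
    also have "\<dots> = (\<Sum>\<beta>\<in>PiE UNIV ?T. \<Sum>\<alpha>\<in>PiE UNIV ?T. (\<Prod>j\<in>UNIV. C (\<beta> j) (\<alpha> j)) * g (vb \<beta>) * M \<alpha> x)"
      by (intro sum.cong refl) (simp add: sum_distrib_right sum_distrib_left algebra_simps)
    also have "\<dots> = (\<Sum>\<alpha>\<in>PiE UNIV ?T. \<Sum>\<beta>\<in>PiE UNIV ?T. (\<Prod>j\<in>UNIV. C (\<beta> j) (\<alpha> j)) * g (vb \<beta>) * M \<alpha> x)"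
      by (rule sum.swap)
    also have "\<dots> = (\<Sum>\<alpha>\<in>PiE UNIV ?T. c \<alpha> * M \<alpha> x)"
      by (intro sum.cong refl) (simp add: c_def sum_distrib_right)
    finally show ?thesis .
  qed
  have sub1: "PiE UNIV ?T \<subseteq> ?A"
  proof
    fix \<alpha> assume "\<alpha> \<in> PiE UNIV ?T"
    then have "\<alpha> i \<le> l" for i by (auto simp: PiE_def Pi_def less_imp_le)
    then have "(\<Sum>i\<in>UNIV. \<alpha> i) \<le> (\<Sum>i\<in>(UNIV::'n set). l)" by (intro sum_mono) auto
    then show "\<alpha> \<in> ?A" by (simp add: mult.commute)
  qed
  have finA: "finite ?A"
  proof (rule finite_subset)
    show "?A \<subseteq> PiE UNIV (\<lambda>_. {..CARD('n) * l})"
    proof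
      fix \<alpha> assume a: "\<alpha> \<in> ?A"
      have "\<alpha> i \<le> (\<Sum>i\<in>UNIV. \<alpha> i)" for i by (rule member_le_sum) auto
      then show "\<alpha> \<in> PiE UNIV (\<lambda>_. {..CARD('n) * l})" using a by (auto simp: PiE_def Pi_def intro: order_trans)
    qed
    show "finite (PiE UNIV (\<lambda>_::'n. {..CARD('n) * l}))" by (rule finite_PiE) auto
  qed
  show ?thesis unfolding poly_fun_deg_def
  proof (intro exI allI)
    fix x
    have "g x = (\<Sum>\<alpha>\<in>PiE UNIV ?T. c \<alpha> * M \<alpha> x)" by (rule rep)
    also have "\<dots> = (\<Sum>\<alpha>\<in>?A. c \<alpha> * M \<alpha> x)"
      by (rule sum.mono_neutral_right[OF finA sub1, symmetric]) (auto simp: c_def)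
    finally show "g x = (\<Sum>\<alpha>\<in>?A. c \<alpha> * (\<Prod>i\<in>UNIV. complex_of_real (x $ i ^ \<alpha> i)))"
      by (simp add: M_def)
  qed
qed

end

lemma derive_tinv:
  fixes E :: "(real^'n \<Rightarrow> complex) set" and l :: nat
  assumes card2: "CARD('n) \<ge> 2"
    and cont: "\<forall>f\<in>E. continuous_on UNIV f"
    and cs: "csubspace_fun E"
    and cd: "cdim_fun E l"
    and hyp: "\<forall>a::real^'n. \<forall>g\<in>translate_set a E. \<forall>U::real^'n^'n. rotation_matrix U \<longrightarrow>
           (\<lambda>x. g (matrix_inv U *v x)) \<in> translate_set a E"
  shows "tinv E l"
proof -
  have sub: "fvs.subspace E"
    using cs unfolding csubspace_fun_def fvs.subspace_def by (simp add: zero_fun_def plus_fun_def)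
  have spanB: "\<exists>B. finite B \<and> card B = l \<and> E \<subseteq> fvs.span B"
  proof -
    obtain B where B: "finite B" "card B = l" "cspan_fun B = E" using cd by (auto simp: cdim_fun_def)
    have "E \<subseteq> fvs.span B"
    proof
      fix f assume "f \<in> E"
      then obtain c where c: "f = (\<lambda>x. \<Sum>b\<in>B. c b * b x)" using B(3) by (auto simp: cspan_fun_def)
      have "f = (\<Sum>b\<in>B. (\<lambda>x. c b * b x))" by (simp add: c fun_eq_iff sum_fun_apply)
      also have "\<dots> \<in> fvs.span B"
        by (intro fvs.span_sum fvs.span_scale[of _ B, simplified] fvs.span_base)
      finally show "f \<in> fvs.span B" .
    qed
    then show ?thesis using B by blast
  qed
  have tE: "translate_set 0 E = E" by (simp add: translate_set_def)
  have rot: "(\<lambda>x. f (W *v x)) \<in> E" if "f \<in> E" "rotation_matrix W" for f W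
  proof -
    have "rotation_matrix (transpose W)" using that(2) by (rule rot_transpose)
    moreover have "matrix_inv (transpose W) = W"
      using rot_minv[OF \<open>rotation_matrix (transpose W)\<close>] by simp
    ultimately show ?thesis using hyp that(1) tE by metis
  qed
  have tr2: "(\<lambda>x. f (x + 2 *\<^sub>R c)) \<in> E" if "f \<in> E" for f and c :: "real^'n"
  proof -
    obtain f0 where f0: "orthogonal_transformation f0" "det (matrix f0) = 1" "f0 c = - c"
      using rotation_exists[OF card2, of c "-c"] by auto
    define M where "M = matrix f0"
    have lf: "Vector_Spaces.linear (*s) (*s) f0"
      using linear.axioms[OF orthogonal_transformation_linear[OF f0(1)]] unfolding scalar_mult_eq_scaleR .
    have rM: "rotation_matrix M"
      using f0 by (simp add: M_def rotation_matrix_def orthogonal_transformation_matrix)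
    have Mc: "M *v c = - c" using f0(3) matrix_works[OF lf] by (simp add: M_def)
    have rMt: "rotation_matrix (transpose M)" using rM by (rule rot_transpose)
    have mi: "matrix_inv (transpose M) = M" using rot_minv[OF rMt] by simp
    have "(\<lambda>x. f (x + c)) \<in> translate_set c E" using that by (auto simp: translate_set_def)
    then have "(\<lambda>x. f (matrix_inv (transpose M) *v x + c)) \<in> translate_set c E"
      using hyp rMt by fastforce
    then obtain h where h: "h \<in> E" "(\<lambda>x. f (M *v x + c)) = (\<lambda>x. h (x + c))"
      by (auto simp: translate_set_def mi)
    have hf: "h y = f (M *v y + 2 *\<^sub>R c)" for y
    proof -
      have "h y = h ((y - c) + c)" by simp
      also have "\<dots> = f (M *v (y - c) + c)" using h(2) by (metis)
      also have "\<dots> = f (M *v y + 2 *\<^sub>R c)"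
        by (simp add: matrix_vector_mult_diff_distrib Mc scaleR_2 algebra_simps)
      finally show ?thesis .
    qed
    have "(\<lambda>x. h (transpose M *v x)) \<in> E" using rot[OF h(1) rMt] .
    moreover have "M ** transpose M = mat 1" using rM by (simp add: rotation_matrix_def orthogonal_matrix_def)
    then have MM: "M *v (transpose M *v x) = x" for x by (metis matrix_vector_mul_assoc matrix_vector_mul_lid)
    have "(\<lambda>x. h (transpose M *v x)) = (\<lambda>x. f (x + 2 *\<^sub>R c))" by (rule ext) (simp only: hf MM)
    ultimately show ?thesis by simp
  qed
  have trans: "(\<lambda>x. f (x + a)) \<in> E" if "f \<in> E" for f and a :: "real^'n"
    using tr2[OF that, of "(1/2) *\<^sub>R a"] by simp
  show ?thesis
    using card2 cont sub spanB trans rot by unfold_locales auto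
qed

theorem lemma4p11:
  fixes E :: "(real^'n \<Rightarrow> complex) set" and l :: nat
  assumes "CARD('n) \<ge> 2"
    and "\<forall>f\<in>E. continuous_on UNIV f"
    and "csubspace_fun E"
    and "cdim_fun E l"
    and "\<forall>a::real^'n. \<forall>g\<in>translate_set a E. \<forall>U::real^'n^'n. rotation_matrix U \<longrightarrow>
           (\<lambda>x. g (matrix_inv U *v x)) \<in> translate_set a E"
  shows "\<forall>f\<in>E. poly_fun_deg (CARD('n) * l) f"
proof -
  interpret tinv E l by (rule derive_tinv[OF assms])
  show ?thesis using poly_all by blast
qed

end
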